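(* Let $r>0$, $\alpha\in(0,1]$, $K>0$, $\delta>0$, $\sigma>0$, and consider the system \[ \dot p = rm\Big(1-\frac{p+m}{K}\Big)-\delta p,\qquad \dot m=\alpha r p\Big(1-\frac{p+m}{K}\Big)-\sigma m \] on $\Omega=\{(p,m)\in\mathbb{R}^2:\ p\ge0,\ m\ge0,\ p+m\le K\}$. If $R_0=r\sqrt{\alpha/(\delta\sigma)}\le 1$, then the equilibrium $E_0=(0,0)$ is globally asymptotically stable in $\Omega$. *)

theory Defs
  imports "HOL-Analysis.Analysis"
begin

definition is_solution :: "(real \<times> real \<Rightarrow> real \<times> real) \<Rightarrow> (real \<Rightarrow> real \<times> real) \<Rightarrow> bool" where
  "is_solution F x \<longleftrightarrow>
     (\<forall>t\<ge>0. (x has_vector_derivative F (x t)) (at t within {0..}))"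

definition is_equilibrium :: "(real \<times> real \<Rightarrow> real \<times> real) \<Rightarrow> real \<times> real \<Rightarrow> bool" where
  "is_equilibrium F e \<longleftrightarrow> F e = 0"

definition stable_in :: "(real \<times> real \<Rightarrow> real \<times> real) \<Rightarrow> (real \<times> real) set \<Rightarrow> real \<times> real \<Rightarrow> bool" where
  "stable_in F S e \<longleftrightarrow>
     (\<forall>\<epsilon>>0. \<exists>\<eta>>0. \<forall>x. is_solution F x \<and> x 0 \<in> S \<and> dist (x 0) e < \<eta>
        \<longrightarrow> (\<forall>t\<ge>0. dist (x t) e < \<epsilon>))"

definition globally_attractive_in :: "(real \<times> real \<Rightarrow> real \<times> real) \<Rightarrow> (real \<times> real) set \<Rightarrow> real \<times> real \<Rightarrow> bool" where
  "globally_attractive_in F S e \<longleftrightarrow>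
     (\<forall>x. is_solution F x \<and> x 0 \<in> S \<longrightarrow> (x \<longlongrightarrow> e) at_top)"

definition globally_asymptotically_stable_in ::
  "(real \<times> real \<Rightarrow> real \<times> real) \<Rightarrow> (real \<times> real) set \<Rightarrow> real \<times> real \<Rightarrow> bool" where
  "globally_asymptotically_stable_in F S e \<longleftrightarrow>
     e \<in> S \<and> is_equilibrium F e \<and> stable_in F S e \<and> globally_attractive_in F S e"

definition pm_field :: "real \<Rightarrow> real \<Rightarrow> real \<Rightarrow> real \<Rightarrow> real \<Rightarrow> real \<times> real \<Rightarrow> real \<times> real" where
  "pm_field r \<alpha> K \<delta> \<sigma> = (\<lambda>(p, m).
     (r * m * (1 - (p + m) / K) - \<delta> * p,
      \<alpha> * r * p * (1 - (p + m) / K) - \<sigma> * m))"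

definition Omega :: "real \<Rightarrow> (real \<times> real) set" where
  "Omega K = {(p, m). p \<ge> 0 \<and> m \<ge> 0 \<and> p + m \<le> K}"

end

theory Submission
  imports Defs
begin



lemma vd_fst:
  assumes "(x has_vector_derivative v) (at t within S)"
  shows "((\<lambda>t. fst (x t)) has_real_derivative fst v) (at t within S)"
  using has_derivative_fst[OF assms[unfolded has_vector_derivative_def]]
  by (simp add: has_real_derivative_iff_has_vector_derivative has_vector_derivative_def)

lemma vd_snd:
  assumes "(x has_vector_derivative v) (at t within S)"
  shows "((\<lambda>t. snd (x t)) has_real_derivative snd v) (at t within S)"
  using has_derivative_snd[OF assms[unfolded has_vector_derivative_def]]
  by (simp add: has_real_derivative_iff_has_vector_derivative has_vector_derivative_def)



lemma deriv_h: "((\<lambda>y::real. (min y 0)^2) has_real_derivative 2 * min y 0) (at y)"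
proof (cases "y = 0")
  case True
  have bnd: "norm (((min z 0)^2 - (min 0 0)^2) / (z - 0)) \<le> \<bar>z\<bar>" for z :: real
  proof (cases "z < 0")
    case True
    then have "min z 0 = z" by simp
    then show ?thesis using True by (simp add: power2_eq_square)
  next
    case False
    then have "min z 0 = 0" by simp
    then show ?thesis by simp
  qed
  have ev: "\<forall>\<^sub>F z in at 0. norm (((min z 0)^2 - (min 0 0)^2) / (z - 0)) \<le> \<bar>z\<bar>"
    using bnd by (intro always_eventually) blast
  have ab: "((\<lambda>z::real. \<bar>z\<bar>) \<longlongrightarrow> 0) (at 0)"
    using tendsto_rabs[OF tendsto_ident_at[of "0::real" UNIV]] by simp
  have "((\<lambda>z. ((min z 0)^2 - (min 0 0)^2) / (z - 0)) \<longlongrightarrow> 0) (at (0::real))"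
    by (rule Lim_null_comparison[OF ev ab])
  then show ?thesis using True by (simp add: has_field_derivative_iff)
next
  case False
  show ?thesis
  proof (cases "y < 0")
    case True
    have "((\<lambda>y::real. y^2) has_real_derivative 2 * y) (at y)"
      by (auto intro!: derivative_eq_intros)
    then have "((\<lambda>y::real. (min y 0)^2) has_real_derivative 2 * y) (at y)"
      by (rule has_field_derivative_transform_within_open[where S="{..<0}"]) (use True in auto)
    then show ?thesis using True by simp
  next
    case False': False
    have "((\<lambda>y::real. 0) has_real_derivative 0) (at y)"
      by (auto intro!: derivative_eq_intros)
    then have "((\<lambda>y::real. (min y 0)^2) has_real_derivative 0) (at y)"
      by (rule has_field_derivative_transform_within_open[where S="{0<..}"]) (use False False' in auto)
    then show ?thesis using False' by simp
  qed
qed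


lemma nonincr:
  fixes f f' :: "real \<Rightarrow> real"
  assumes d: "\<And>t. t \<ge> 0 \<Longrightarrow> (f has_real_derivative f' t) (at t within {0..})"
    and n: "\<And>t. a < t \<Longrightarrow> t < b \<Longrightarrow> f' t \<le> 0" and a0: "0 \<le> a" and ab0: "a \<le> b"
  shows "f b \<le> f a"
proof (cases "a = b")
  case False
  then have ab: "a < b" using ab0 by simp
  have c: "continuous_on {a..b} f"
    unfolding continuous_on_eq_continuous_within
  proof
    fix t assume t: "t \<in> {a..b}"
    then have t0: "t \<ge> 0" using a0 by simp
    have "continuous (at t within {0..}) f" by (rule DERIV_continuous[OF d[OF t0]])
    then show "continuous (at t within {a..b}) f"
      by (rule continuous_within_subset) (use a0 in auto)
  qed
  have dat: "(f has_real_derivative f' t) (at t)" if "a < t" for t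
  proof -
    have t0: "t \<ge> 0" using that a0 by simp
    have "t \<in> interior {0..}" using that a0 by simp
    then have "at t within {0..} = at t" by (rule at_within_interior)
    then show ?thesis using d[OF t0] by simp
  qed
  have dif: "f differentiable (at x)" if "a < x" "x < b" for x
    unfolding real_differentiable_def using dat[OF that(1)] by blast
  from MVT[OF ab c dif] obtain l z where z: "a < z" "z < b" "DERIV f z :> l" "f b - f a = (b - a) * l"
    by blast
  have "l = f' z" by (rule DERIV_unique[OF z(3) dat[OF z(1)]])
  then have "l \<le> 0" using n z(1,2) by simp
  then have "(b - a) * l \<le> 0" using ab by (simp add: mult_nonneg_nonpos)
  then show ?thesis using z(4) by simp
qed simp



lemma amgm: "\<bar>(x::real) * y\<bar> \<le> (x^2 + y^2) / 2"
proof -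
  have "0 \<le> (\<bar>x\<bar> - \<bar>y\<bar>)^2" by simp
  also have "\<dots> = x^2 - 2*\<bar>x*y\<bar> + y^2" by (simp add: power2_diff abs_mult)
  finally have "2*\<bar>x*y\<bar> \<le> x^2 + y^2" by linarith
  then show ?thesis by simp
qed

lemma amgm': "- ((x::real) * y) \<le> (x^2 + y^2) / 2"
  using amgm[of x y] by linarith

lemma gen_case:
  fixes q cc g X d W e :: real
  assumes "q < 0" "cc > 0" "0 \<le> g" "g \<le> X" "- W \<le> X" "d \<ge> 0" "e \<ge> 0"
  shows "- g*(q*cc) - d*q^2 - cc^2*W - d*(cc*q) - e \<le> (2*X + d)*(q^2+cc^2)"
proof -
  have X0: "X \<ge> 0" using assms by linarith
  have t1: "- g*(q*cc) \<le> X * ((q^2+cc^2)/2)"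
  proof -
    have a2: "- (q*cc) \<ge> 0" using mult_neg_pos[of q cc] assms by linarith
    have "- g*(q*cc) = g*(-(q*cc))" by simp
    also have "\<dots> \<le> X * (-(q*cc))" using assms(4) a2 by (rule mult_right_mono)
    also have "\<dots> \<le> X * ((q^2+cc^2)/2)" using amgm'[of q cc] X0 by (rule mult_left_mono)
    finally show ?thesis .
  qed
  have t2: "- (cc^2*W) \<le> X * cc^2"
  proof -
    have "cc^2 * (- W) \<le> cc^2 * X" using assms(5) by (intro mult_left_mono) auto
    then show ?thesis by (simp add: algebra_simps)
  qed
  have t3: "- d*(cc*q) \<le> d*((q^2+cc^2)/2)"
  proof -
    have "d*(-(cc*q)) \<le> d*((cc^2+q^2)/2)" using amgm'[of cc q] assms(6) by (rule mult_left_mono)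
    then show ?thesis by (simp add: add.commute)
  qed
  have n: "X*q^2 \<ge> 0" "X*cc^2 \<ge> 0" "d*q^2 \<ge> 0" "d*cc^2 \<ge> 0" using X0 assms by auto
  have r: "(2*X + d)*(q^2+cc^2) = 2*X*q^2 + 2*X*cc^2 + d*q^2 + d*cc^2"
    by (simp add: algebra_simps)
  have l: "X * ((q^2+cc^2)/2) + X * cc^2 + d*((q^2+cc^2)/2) = X*q^2/2 + 3*X*cc^2/2 + d*q^2/2 + d*cc^2/2"
    by (simp add: field_simps)
  have "- g*(q*cc) - d*q^2 - cc^2*W - d*(cc*q) - e \<le> X * ((q^2+cc^2)/2) + X * cc^2 + d*((q^2+cc^2)/2)"
    using t1 t2 t3 n(3) assms(7) by linarith
  also have "\<dots> \<le> (2*X + d)*(q^2+cc^2)" unfolding l r using n by linarith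
  finally show ?thesis .
qed

lemma key_ineq:
  fixes r \<alpha> K \<delta> \<sigma> B p m :: real
  assumes "r > 0" "0 < \<alpha>" "\<alpha> \<le> 1" "K > 0" "\<delta> > 0" "\<sigma> > 0" "\<bar>p\<bar> \<le> B" "\<bar>m\<bar> \<le> B"
  shows "min p 0 * (r * m * (1 - (p + m) / K) - \<delta> * p) + min m 0 * (\<alpha> * r * p * (1 - (p + m) / K) - \<sigma> * m)
     + max (p + m - K) 0 * ((r * m * (1 - (p + m) / K) - \<delta> * p) + (\<alpha> * r * p * (1 - (p + m) / K) - \<sigma> * m))
     \<le> (2*r*B/K + \<delta> + \<sigma> + r*(1+2*B/K)) * ((min p 0)^2 + (min m 0)^2 + (max (p + m - K) 0)^2)"
proof -
  define u where "u = 1 - (p + m) / K"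
  define P where "P = r * m * u - \<delta> * p"
  define M where "M = \<alpha> * r * p * u - \<sigma> * m"
  define a where "a = min p 0"
  define b where "b = min m 0"
  define c where "c = max (p + m - K) 0"
  define L where "L = 2*r*B/K + \<delta> + \<sigma> + r*(1+2*B/K)"
  have B0: "B \<ge> 0" using assms(7) by simp
  have Lge: "L \<ge> 2*r*B/K + \<delta> + \<sigma>" "L \<ge> r*(1+2*B/K)" "L \<ge> 0"
    unfolding L_def using assms B0 by (auto intro!: add_nonneg_nonneg mult_nonneg_nonneg)
  define X where "X = r*B/K"
  have X0: "X \<ge> 0" using assms B0 by (simp add: X_def)
  have X2: "2*X = 2*r*B/K" unfolding X_def by simp
  have XL: "2*X + \<delta> \<le> L" "2*X + \<sigma> \<le> L" using X2 Lge(1) assms(5,6) by linarith+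
  have Wb: "- ((r*m + \<alpha>*r*p)/K) \<le> X" if "p \<ge> 0 \<or> m \<ge> 0" for dummy :: bool
  proof -
    have "\<alpha>*\<bar>p\<bar> \<le> 1*\<bar>p\<bar>" using assms by (intro mult_right_mono) auto
    then have ap: "\<bar>\<alpha>*p\<bar> \<le> B" using assms(2,7) by (simp add: abs_mult)
    then have "\<alpha>*p \<ge> -B" using abs_ge_minus_self[of "\<alpha>*p"] by linarith
    then have rap: "r*(\<alpha>*p) \<ge> r*(-B)" using assms(1) by (intro mult_left_mono) auto
    have rm: "r*m \<ge> r*(-B)" using assms(1,8) by (intro mult_left_mono) auto
    have "r*(\<alpha>*p) \<ge> 0 \<or> r*m \<ge> 0" using that assms by auto
    then have "r*m + r*(\<alpha>*p) \<ge> r*(-B)" using rap rm by linarith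
    then have "r*m + \<alpha>*r*p \<ge> - (r*B)" by (simp add: algebra_simps)
    then have "(- (r*B))/K \<le> (r*m + \<alpha>*r*p)/K" using assms(4) by (intro divide_right_mono) auto
    then show ?thesis unfolding X_def by (simp only: divide_minus_left)
  qed
  have goal: "a*P + b*M + c*(P+M) \<le> L*(a^2+b^2+c^2)"
  proof -
  consider (c1) "p \<ge> 0" "m \<ge> 0" "p+m \<le> K" | (c2) "p \<ge> 0" "m \<ge> 0" "p+m > K"
    | (c3) "p < 0" "m \<ge> 0" "p+m \<le> K" | (c4) "p < 0" "m \<ge> 0" "p+m > K"
    | (c5) "p \<ge> 0" "m < 0" "p+m \<le> K" | (c6) "p \<ge> 0" "m < 0" "p+m > K"
    | (c7) "p < 0" "m < 0" by linarith
  then show ?thesis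
  proof cases
    case c1
    then show ?thesis using Lge by (simp add: a_def b_def c_def)
  next
    case c2
    have u: "u < 0" using c2 assms(4) by (simp add: u_def field_simps)
    have "u * (r*m + \<alpha>*r*p) \<le> 0" using u c2 assms by (simp add: mult_nonpos_nonneg)
    moreover have "P + M = u * (r*m + \<alpha>*r*p) - \<delta>*p - \<sigma>*m" by (simp add: P_def M_def algebra_simps)
    moreover have "\<delta>*p \<ge> 0" "\<sigma>*m \<ge> 0" using c2 assms by auto
    ultimately have "P + M \<le> 0" by linarith
    then have "c*(P+M) \<le> 0" by (simp add: c_def mult_nonneg_nonpos)
    moreover have "L*c^2 \<ge> 0" using Lge by simp
    ultimately show ?thesis using c2 by (simp add: a_def b_def)
  next
    case c3
    have u: "u \<ge> 0" using c3 assms(4) by (simp add: u_def field_simps)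
    have "p * (r*m*u) \<le> 0" using u c3 assms by (simp add: mult_nonpos_nonneg)
    moreover have "p*(\<delta>*p) \<ge> 0" using assms(5) by (metis mult.left_commute mult_nonneg_nonneg less_imp_le zero_le_square)
    ultimately have "p * P \<le> 0" unfolding P_def by (simp add: right_diff_distrib)
    moreover have "L*p^2 \<ge> 0" using Lge by simp
    ultimately show ?thesis using c3 by (simp add: a_def b_def c_def)
  next
    case c5
    have u: "u \<ge> 0" using c5 assms(4) by (simp add: u_def field_simps)
    have "m * (\<alpha>*r*p*u) \<le> 0" using u c5 assms by (simp add: mult_nonpos_nonneg)
    moreover have "m*(\<sigma>*m) \<ge> 0" using assms(6) by (metis mult.left_commute mult_nonneg_nonneg less_imp_le zero_le_square)
    ultimately have "m * M \<le> 0" unfolding M_def by (simp add: right_diff_distrib)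
    moreover have "L*m^2 \<ge> 0" using Lge by simp
    ultimately show ?thesis using c5 by (simp add: a_def b_def c_def)
  next
    case c7
    have s2: "-(p+m) \<le> 2*B" using c7 assms(7,8) by linarith
    have "(-(p+m))/K \<le> 2*B/K" using divide_right_mono[OF s2] assms(4) by simp
    moreover have "(-(p+m))/K \<ge> 0" using c7 assms(4) by simp
    moreover have "u = 1 + (-(p+m))/K" unfolding u_def divide_minus_left by simp
    ultimately have u1: "u \<ge> 1" "u \<le> 1 + 2*B/K" by auto
    have e: "p*P + m*M = (1+\<alpha>)*r*u*(p*m) - \<delta>*p^2 - \<sigma>*m^2"
      unfolding P_def M_def by (simp add: algebra_simps power2_eq_square)
    have pm: "p*m > 0" using c7 by (simp add: mult_neg_neg)
    have ar: "(1+\<alpha>)*r \<le> 2*r" using assms(1,3) by simp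
    have "(1+\<alpha>)*r*u \<le> 2*r*(1+2*B/K)" by (rule mult_mono[OF ar u1(2)]) (use u1(1) assms(1,2,3) in auto)
    then have "(1+\<alpha>)*r*u*(p*m) \<le> 2*r*(1+2*B/K)*(p*m)" using pm by (intro mult_right_mono) auto
    also have "\<dots> \<le> 2*r*(1+2*B/K) * ((p^2+m^2)/2)"
    proof (rule mult_left_mono)
      show "p*m \<le> (p^2+m^2)/2" using amgm[of p m] by linarith
      show "0 \<le> 2*r*(1+2*B/K)" using assms(1,4) B0 by simp
    qed
    also have "\<dots> = r*(1+2*B/K)*(p^2+m^2)" by simp
    also have "\<dots> \<le> L*(p^2+m^2)" by (rule mult_right_mono[OF Lge(2)]) simp
    finally have f: "(1+\<alpha>)*r*u*(p*m) \<le> L*(p^2+m^2)" .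
    have "\<delta>*p^2 \<ge> 0" "\<sigma>*m^2 \<ge> 0" using assms(5,6) by auto
    then have "p*P + m*M \<le> L*(p^2+m^2)" using e f by linarith
    moreover have "c = 0" using c7 assms by (simp add: c_def)
    ultimately show ?thesis using c7 by (simp add: a_def b_def)
  next
    case c4
    define cc where "cc = p + m - K"
    have cc: "cc > 0" "c = cc" "a = p" "b = 0" using c4 by (auto simp: cc_def a_def b_def c_def)
    have u: "u = - cc / K" using assms(4) by (simp add: u_def cc_def field_simps)
    have e: "p*P + cc*(P+M) = - (r*m/K)*(p*cc) - \<delta>*p^2 - cc^2*((r*m + \<alpha>*r*p)/K) - \<delta>*(cc*p) - \<sigma>*cc*m"
      unfolding P_def M_def u using assms(4) by (simp add: field_simps power2_eq_square)
    have "r*m \<le> r*B" using assms(1,8) by (intro mult_left_mono) simp_all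
    then have g: "r*m/K \<le> X" unfolding X_def using assms(4) by (intro divide_right_mono) simp_all
    have g0: "0 \<le> r*m/K" using assms(1,4) c4(2) by simp
    have W: "- ((r*m + \<alpha>*r*p)/K) \<le> X" using Wb c4(2) by blast
    have "p*P + cc*(P+M) \<le> (2*X + \<delta>)*(p^2+cc^2)"
      unfolding e by (rule gen_case[OF c4(1) cc(1) g0 g W]) (use assms(1,5,6) c4(2) cc(1) in simp_all)
    also have "\<dots> \<le> L*(p^2+cc^2)" using XL by (intro mult_right_mono) auto
    finally show ?thesis using cc by simp
  next
    case c6
    define cc where "cc = p + m - K"
    have cc: "cc > 0" "c = cc" "a = 0" "b = m" using c6 by (auto simp: cc_def a_def b_def c_def)
    have u: "u = - cc / K" using assms(4) by (simp add: u_def cc_def field_simps)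
    have e: "m*M + cc*(P+M) = - (\<alpha>*r*p/K)*(m*cc) - \<sigma>*m^2 - cc^2*((r*m + \<alpha>*r*p)/K) - \<sigma>*(cc*m) - \<delta>*cc*p"
      unfolding P_def M_def u using assms(4) by (simp add: field_simps power2_eq_square)
    have a1: "\<alpha>*\<bar>p\<bar> \<le> 1*\<bar>p\<bar>" using assms(2,3) by (intro mult_right_mono) simp_all
    have "\<alpha>*p \<le> B" using a1 assms(7) c6(1) by simp
    then have "r*(\<alpha>*p) \<le> r*B" using assms(1) by (intro mult_left_mono) simp_all
    then have "r*(\<alpha>*p)/K \<le> r*B/K" using assms(4) by (intro divide_right_mono) simp_all
    moreover have "\<alpha>*r*p/K = r*(\<alpha>*p)/K" by (simp add: mult_ac)
    ultimately have g: "\<alpha>*r*p/K \<le> X" unfolding X_def by linarith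
    have g0: "0 \<le> \<alpha>*r*p/K" using assms(1,2,4) c6(1) by simp
    have W: "- ((r*m + \<alpha>*r*p)/K) \<le> X" using Wb c6(1) by blast
    have "m*M + cc*(P+M) \<le> (2*X + \<sigma>)*(m^2+cc^2)"
      unfolding e by (rule gen_case[OF c6(2) cc(1) g0 g W]) (use assms(1,5,6) c6(1) cc(1) in simp_all)
    also have "\<dots> \<le> L*(m^2+cc^2)" using XL by (intro mult_right_mono) auto
    finally show ?thesis using cc by simp
  qed
  qed
  then show ?thesis unfolding a_def b_def c_def P_def M_def L_def u_def .
qed



lemma field_eq: "pm_field r \<alpha> K \<delta> \<sigma> z =
   (r * snd z * (1 - (fst z + snd z) / K) - \<delta> * fst z,
    \<alpha> * r * fst z * (1 - (fst z + snd z) / K) - \<sigma> * snd z)"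
  by (simp add: pm_field_def case_prod_beta)

lemma sol_derivs:
  assumes "is_solution (pm_field r \<alpha> K \<delta> \<sigma>) x" "t \<ge> 0"
  shows "((\<lambda>t. fst (x t)) has_real_derivative
            r * snd (x t) * (1 - (fst (x t) + snd (x t)) / K) - \<delta> * fst (x t)) (at t within {0..})"
    and "((\<lambda>t. snd (x t)) has_real_derivative
            \<alpha> * r * fst (x t) * (1 - (fst (x t) + snd (x t)) / K) - \<sigma> * snd (x t)) (at t within {0..})"
proof -
  have d: "(x has_vector_derivative pm_field r \<alpha> K \<delta> \<sigma> (x t)) (at t within {0..})"
    using assms unfolding is_solution_def by auto
  show "((\<lambda>t. fst (x t)) has_real_derivative
            r * snd (x t) * (1 - (fst (x t) + snd (x t)) / K) - \<delta> * fst (x t)) (at t within {0..})"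
    using vd_fst[OF d] by (simp add: field_eq)
  show "((\<lambda>t. snd (x t)) has_real_derivative
            \<alpha> * r * fst (x t) * (1 - (fst (x t) + snd (x t)) / K) - \<sigma> * snd (x t)) (at t within {0..})"
    using vd_snd[OF d] by (simp add: field_eq)
qed

lemma deriv_h2: "((\<lambda>y::real. (max (y - K) 0)^2) has_real_derivative 2 * max (y - K) 0) (at y)"
proof -
  have d: "((\<lambda>y::real. (min (K - y) 0)^2) has_real_derivative 2 * min (K - y) 0 * (-1)) (at y)"
    by (rule DERIV_chain2[OF deriv_h]) (auto intro!: derivative_eq_intros)
  have eqf: "(\<lambda>y::real. (min (K - y) 0)^2) = (\<lambda>y. (max (y - K) 0)^2)"
    by (rule ext) (simp add: min_def max_def power2_commute)
  have eqv: "2 * min (K - y) 0 * (-1) = 2 * max (y - K) 0" by (simp add: min_def max_def)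
  show ?thesis using d unfolding eqf eqv .
qed

lemma invariant:
  fixes r \<alpha> K \<delta> \<sigma> :: real
  assumes par: "r > 0" "0 < \<alpha>" "\<alpha> \<le> 1" "K > 0" "\<delta> > 0" "\<sigma> > 0"
    and sol: "is_solution (pm_field r \<alpha> K \<delta> \<sigma>) x" and x0: "x 0 \<in> Omega K" and T: "T \<ge> 0"
  shows "x T \<in> Omega K"
proof -
  define p where "p t = fst (x t)" for t
  define m where "m t = snd (x t)" for t
  define P where "P t = r * m t * (1 - (p t + m t) / K) - \<delta> * p t" for t
  define M where "M t = \<alpha> * r * p t * (1 - (p t + m t) / K) - \<sigma> * m t" for t
  have dp: "(p has_real_derivative P t) (at t within {0..})" if "t \<ge> 0" for t
    using sol_derivs(1)[OF sol that] unfolding p_def m_def P_def by simp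
  have dm: "(m has_real_derivative M t) (at t within {0..})" if "t \<ge> 0" for t
    using sol_derivs(2)[OF sol that] unfolding p_def m_def M_def by simp
  have cont: "continuous_on {0..T} x"
    unfolding continuous_on_eq_continuous_within
  proof
    fix t assume t: "t \<in> {0..T}"
    have "(x has_vector_derivative pm_field r \<alpha> K \<delta> \<sigma> (x t)) (at t within {0..})"
      using sol t unfolding is_solution_def by auto
    then have "continuous (at t within {0..}) x" by (rule has_vector_derivative_continuous)
    then show "continuous (at t within {0..T}) x" by (rule continuous_within_subset) auto
  qed
  have "bounded (x ` {0..T})" by (rule compact_imp_bounded[OF compact_continuous_image[OF cont compact_Icc]])
  then obtain B where B0: "\<forall>t\<in>{0..T}. norm (x t) \<le> B" unfolding bounded_iff by auto
  have B: "norm (x t) \<le> B" if "t \<in> {0..T}" for t using B0 that by blast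
  have pB: "\<bar>p t\<bar> \<le> B" "\<bar>m t\<bar> \<le> B" if "t \<in> {0..T}" for t
  proof -
    have "x t = (p t, m t)" by (simp add: p_def m_def)
    then show "\<bar>p t\<bar> \<le> B" "\<bar>m t\<bar> \<le> B" using B[OF that] norm_fst_le[of "p t" "m t"] norm_snd_le[of "m t" "p t"]
      by auto
  qed
  define L where "L = 2*r*B/K + \<delta> + \<sigma> + r*(1+2*B/K)"
  define N where "N t = (min (p t) 0)^2 + (min (m t) 0)^2 + (max (p t + m t - K) 0)^2" for t
  define N' where "N' t = 2 * min (p t) 0 * P t + 2 * min (m t) 0 * M t + 2 * max (p t + m t - K) 0 * (P t + M t)" for t
  have dN: "(N has_real_derivative N' t) (at t within {0..})" if "t \<ge> 0" for t
  proof -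
    have 1: "((\<lambda>t. (min (p t) 0)^2) has_real_derivative 2 * min (p t) 0 * P t) (at t within {0..})"
      by (rule DERIV_chain2[OF deriv_h dp[OF that]])
    have 2: "((\<lambda>t. (min (m t) 0)^2) has_real_derivative 2 * min (m t) 0 * M t) (at t within {0..})"
      by (rule DERIV_chain2[OF deriv_h dm[OF that]])
    have "((\<lambda>t. p t + m t) has_real_derivative P t + M t) (at t within {0..})"
      by (rule DERIV_add[OF dp[OF that] dm[OF that]])
    then have 3: "((\<lambda>t. (max (p t + m t - K) 0)^2) has_real_derivative 2 * max (p t + m t - K) 0 * (P t + M t)) (at t within {0..})"
      by (rule DERIV_chain2[OF deriv_h2])
    show ?thesis unfolding N_def N'_def using DERIV_add[OF DERIV_add[OF 1 2] 3] by simp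
  qed
  define G where "G t = N t * exp (- (2*L) * t)" for t
  define G' where "G' t = N' t * exp (- (2*L) * t) + N t * (exp (- (2*L) * t) * (- (2*L)))" for t
  have dG: "(G has_real_derivative G' t) (at t within {0..})" if "t \<ge> 0" for t
  proof -
    have "((\<lambda>t. exp (- (2*L) * t)) has_real_derivative exp (- (2*L) * t) * (- (2*L))) (at t within {0..})"
      by (auto intro!: derivative_eq_intros)
    from DERIV_mult[OF dN[OF that] this] show ?thesis unfolding G_def G'_def by (simp add: mult_ac)
  qed
  have G'neg: "G' t \<le> 0" if "0 < t" "t < T" for t
  proof -
    have tT: "t \<in> {0..T}" using that by simp
    have k1: "min (p t) 0 * P t + min (m t) 0 * M t + max (p t + m t - K) 0 * (P t + M t) \<le> L * N t"
      using key_ineq[OF par pB[OF tT]] unfolding P_def M_def L_def N_def .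
    have k2: "N' t = 2 * (min (p t) 0 * P t + min (m t) 0 * M t + max (p t + m t - K) 0 * (P t + M t))"
      unfolding N'_def by (simp only: distrib_left mult.assoc)
    have k3: "2 * L * N t = 2 * (L * N t)" by simp
    have k: "N' t \<le> 2 * L * N t" unfolding k2 k3 by (rule mult_left_mono[OF k1]) simp
    have "G' t = (N' t - 2 * L * N t) * exp (- (2*L) * t)" unfolding G'_def by (simp add: algebra_simps)
    also have "\<dots> \<le> 0" using k by (simp add: mult_nonpos_nonneg)
    finally show ?thesis .
  qed
  have "G T \<le> G 0" by (rule nonincr[OF dG G'neg]) (use T in auto)
  moreover have "N 0 = 0" using x0 unfolding N_def p_def m_def Omega_def by (auto simp: case_prod_beta)
  ultimately have "N T \<le> 0" unfolding G_def by (simp add: mult_le_0_iff)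
  then have "(min (p T) 0)^2 = 0" "(min (m T) 0)^2 = 0" "(max (p T + m T - K) 0)^2 = 0"
    unfolding N_def using zero_le_power2[of "min (p T) 0"] zero_le_power2[of "min (m T) 0"]
      zero_le_power2[of "max (p T + m T - K) 0"] by linarith+
  then have "min (p T) 0 = 0" "min (m T) 0 = 0" "max (p T + m T - K) 0 = 0" by simp_all
  then have "p T \<ge> 0" "m T \<ge> 0" "p T + m T \<le> K" by (simp_all add: min_def max_def split: if_splits)
  then show ?thesis unfolding Omega_def p_def m_def by (auto simp: case_prod_beta)
qed



lemma Vbound:
  fixes r \<alpha> K \<delta> \<sigma> p m :: real
  assumes "r > 0" "0 < \<alpha>" "K > 0" "\<delta> > 0" "\<sigma> > 0" "p \<ge> 0" "m \<ge> 0" "\<alpha>*r*r \<le> \<sigma>*\<delta>"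
  shows "\<sigma> * (r * m * (1 - (p + m) / K) - \<delta> * p) + r * (\<alpha> * r * p * (1 - (p + m) / K) - \<sigma> * m)
     \<le> - (min (\<sigma>*r) (\<alpha>*r*r) / K) * ((p+m)*(p+m))"
proof -
  define \<mu> where "\<mu> = min (\<sigma>*r) (\<alpha>*r*r)"
  have e: "\<sigma> * (r * m * (1 - (p + m) / K) - \<delta> * p) + r * (\<alpha> * r * p * (1 - (p + m) / K) - \<sigma> * m)
     = - ((p+m)/K) * (\<sigma>*r*m + \<alpha>*r*r*p) + p*(\<alpha>*r*r - \<sigma>*\<delta>)"
    by (simp add: algebra_simps)
  have n: "p*(\<alpha>*r*r - \<sigma>*\<delta>) \<le> 0" using assms(6,8) by (simp add: mult_nonneg_nonpos)
  have "\<mu>*m \<le> (\<sigma>*r)*m" unfolding \<mu>_def using assms(7) by (intro mult_right_mono) simp_all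
  moreover have "\<mu>*p \<le> (\<alpha>*r*r)*p" unfolding \<mu>_def using assms(6) by (intro mult_right_mono) simp_all
  ultimately have "\<mu>*(p+m) \<le> \<sigma>*r*m + \<alpha>*r*r*p" by (simp add: distrib_left)
  moreover have "(p+m)/K \<ge> 0" using assms by simp
  ultimately have "((p+m)/K) * (\<mu>*(p+m)) \<le> ((p+m)/K) * (\<sigma>*r*m + \<alpha>*r*r*p)"
    by (intro mult_left_mono)
  moreover have "((p+m)/K) * (\<mu>*(p+m)) = (\<mu> / K) * ((p+m)*(p+m))" by simp
  ultimately have le: "((p+m)/K) * (\<mu>*(p+m)) \<le> ((p+m)/K) * (\<sigma>*r*m + \<alpha>*r*r*p)"
    and eq: "((p+m)/K) * (\<mu>*(p+m)) = (\<mu> / K) * ((p+m)*(p+m))" by blast+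
  have "\<sigma> * (r * m * (1 - (p + m) / K) - \<delta> * p) + r * (\<alpha> * r * p * (1 - (p + m) / K) - \<sigma> * m)
     = - (((p+m)/K) * (\<sigma>*r*m + \<alpha>*r*r*p)) + p*(\<alpha>*r*r - \<sigma>*\<delta>)" using e by simp
  also have "\<dots> \<le> - (((p+m)/K) * (\<sigma>*r*m + \<alpha>*r*r*p))" using n by simp
  also have "\<dots> \<le> - (((p+m)/K) * (\<mu>*(p+m)))" using le by simp
  also have "\<dots> = - (\<mu> / K) * ((p+m)*(p+m))" using eq by simp
  finally have "\<sigma> * (r * m * (1 - (p + m) / K) - \<delta> * p) + r * (\<alpha> * r * p * (1 - (p + m) / K) - \<sigma> * m)
     \<le> - (\<mu> / K) * ((p+m)*(p+m))" .
  then show ?thesis unfolding \<mu>_def .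
qed

lemma norm_le_sum: "fst z \<ge> 0 \<Longrightarrow> snd z \<ge> 0 \<Longrightarrow> norm (z::real\<times>real) \<le> fst z + snd z"
proof -
  assume a: "fst z \<ge> 0" "snd z \<ge> 0"
  have "norm z = sqrt ((fst z)^2 + (snd z)^2)"
    by (metis norm_Pair prod.collapse real_norm_def real_sqrt_abs2 power2_abs)
  also have "\<dots> \<le> sqrt ((fst z + snd z)^2)"
    using a by (intro real_sqrt_le_mono) (simp add: power2_sum)
  also have "\<dots> = fst z + snd z" using a by simp
  finally show ?thesis .
qed

lemma sum_le_norm: "\<bar>fst z\<bar> + \<bar>snd z\<bar> \<le> 2 * norm (z::real\<times>real)"
proof -
  have "\<bar>fst z\<bar> \<le> norm z"
    by (metis norm_fst_le prod.collapse real_norm_def)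
  moreover have "\<bar>snd z\<bar> \<le> norm z"
    by (metis norm_snd_le prod.collapse real_norm_def)
  ultimately show ?thesis by simp
qed

lemma dist_zero_pair: "dist (z::real\<times>real) (0,0) = norm z"
  by (simp add: dist_norm zero_prod_def[symmetric])



lemma R0_ineq:
  fixes r \<alpha> \<delta> \<sigma> :: real
  assumes "r > 0" "0 < \<alpha>" "\<delta> > 0" "\<sigma> > 0" "r * sqrt (\<alpha> / (\<delta> * \<sigma>)) \<le> 1"
  shows "\<alpha>*r*r \<le> \<sigma>*\<delta>"
proof -
  define q where "q = \<alpha>/(\<delta>*\<sigma>)"
  have q0: "q \<ge> 0" using assms by (simp add: q_def)
  have rq0: "0 \<le> r * sqrt q" using q0 assms(1) by simp
  have rq1: "r * sqrt q \<le> 1" using assms(5) unfolding q_def .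
  have "(r * sqrt q)^2 \<le> 1^2" by (rule power_mono[OF rq1 rq0])
  then have "r^2 * q \<le> 1" using q0 by (simp add: power_mult_distrib)
  moreover have ds: "\<delta>*\<sigma> > 0" using assms by simp
  ultimately have "r^2 * \<alpha> \<le> \<delta>*\<sigma>" unfolding q_def by (simp add: field_simps)
  then show ?thesis by (simp add: power2_eq_square mult_ac)
qed

lemma sol_facts:
  fixes r \<alpha> K \<delta> \<sigma> :: real
  assumes par: "r > 0" "0 < \<alpha>" "\<alpha> \<le> 1" "K > 0" "\<delta> > 0" "\<sigma> > 0"
    and hR: "\<alpha>*r*r \<le> \<sigma>*\<delta>"
    and sol: "is_solution (pm_field r \<alpha> K \<delta> \<sigma>) x" and x0: "x 0 \<in> Omega K"
  defines "V \<equiv> \<lambda>t. \<sigma> * fst (x t) + r * snd (x t)"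
  defines "s \<equiv> \<lambda>t. fst (x t) + snd (x t)"
  defines "\<mu> \<equiv> min (\<sigma>*r) (\<alpha>*r*r)"
  shows "\<exists>D. (\<forall>t\<ge>0. (V has_real_derivative D t) (at t within {0..}) \<and> D t \<le> - (\<mu>/K) * (s t * s t))"
proof -
  define D where "D t = \<sigma> * (r * snd (x t) * (1 - (fst (x t) + snd (x t)) / K) - \<delta> * fst (x t))
     + r * (\<alpha> * r * fst (x t) * (1 - (fst (x t) + snd (x t)) / K) - \<sigma> * snd (x t))" for t
  have "(V has_real_derivative D t) (at t within {0..}) \<and> D t \<le> - (\<mu>/K) * (s t * s t)" if t: "t \<ge> 0" for t
  proof
    show "(V has_real_derivative D t) (at t within {0..})"
      unfolding V_def D_def
      by (rule DERIV_add[OF DERIV_cmult[OF sol_derivs(1)[OF sol t]] DERIV_cmult[OF sol_derivs(2)[OF sol t]]])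
    have om: "x t \<in> Omega K" by (rule invariant[OF par sol x0 t])
    then have "fst (x t) \<ge> 0" "snd (x t) \<ge> 0" unfolding Omega_def by (auto simp: case_prod_beta)
    from Vbound[OF par(1,2,4,5,6) this hR]
    show "D t \<le> - (\<mu>/K) * (s t * s t)" unfolding D_def s_def \<mu>_def .
  qed
  then show ?thesis by blast
qed

theorem mainTheorem3:
  fixes r \<alpha> K \<delta> \<sigma> :: real
  assumes "r > 0" and "0 < \<alpha>" and "\<alpha> \<le> 1" and "K > 0" and "\<delta> > 0" and "\<sigma> > 0"
    and "r * sqrt (\<alpha> / (\<delta> * \<sigma>)) \<le> 1"
  shows "globally_asymptotically_stable_in (pm_field r \<alpha> K \<delta> \<sigma>) (Omega K) (0, 0)"
proof -
  note par = assms(1-6)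
  have hR: "\<alpha>*r*r \<le> \<sigma>*\<delta>" by (rule R0_ineq) (use assms in auto)
  define cmin where "cmin = min \<sigma> r"
  define cmax where "cmax = max \<sigma> r"
  define \<mu> where "\<mu> = min (\<sigma>*r) (\<alpha>*r*r)"
  have cmin0: "cmin > 0" and cmax0: "cmax > 0" and mu0: "\<mu> > 0"
    using assms by (auto simp: cmin_def cmax_def \<mu>_def)
  have main:
     "\<And>t. t \<ge> 0 \<Longrightarrow> x t \<in> Omega K"
     "\<And>a b. 0 \<le> a \<Longrightarrow> a \<le> b \<Longrightarrow> \<sigma> * fst (x b) + r * snd (x b) \<le> \<sigma> * fst (x a) + r * snd (x a)"
     "\<And>t. t \<ge> 0 \<Longrightarrow> norm (x t) \<le> (\<sigma> * fst (x t) + r * snd (x t)) / cmin"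
     "\<And>t. t \<ge> 0 \<Longrightarrow> \<sigma> * fst (x t) + r * snd (x t) \<le> cmax * (fst (x t) + snd (x t))"
     "\<And>c0 T. c0 > 0 \<Longrightarrow> T \<ge> 0 \<Longrightarrow> (\<forall>t\<in>{0..T}. fst (x t) + snd (x t) \<ge> c0) \<Longrightarrow>
        \<sigma> * fst (x T) + r * snd (x T) \<le> \<sigma> * fst (x 0) + r * snd (x 0) - (\<mu>/K)*(c0*c0) * T"
    if sol: "is_solution (pm_field r \<alpha> K \<delta> \<sigma>) x" and x0: "x 0 \<in> Omega K"
    for x
  proof -
    define V where "V t = \<sigma> * fst (x t) + r * snd (x t)" for t
    define s where "s t = fst (x t) + snd (x t)" for t
    obtain D where D: "\<And>t. t \<ge> 0 \<Longrightarrow> (V has_real_derivative D t) (at t within {0..})"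
       "\<And>t. t \<ge> 0 \<Longrightarrow> D t \<le> - (\<mu>/K) * (s t * s t)"
      using sol_facts[OF par hR sol x0] unfolding V_def[abs_def] s_def[abs_def] \<mu>_def by blast
    have inv: "\<forall>t\<ge>0. x t \<in> Omega K" using invariant[OF par sol x0] by blast
    have nn: "fst (x t) \<ge> 0" "snd (x t) \<ge> 0" if "t \<ge> 0" for t
      using inv that unfolding Omega_def by (auto simp: case_prod_beta)
    have Dn: "D t \<le> 0" if "t \<ge> 0" for t
    proof -
      have "0 \<le> (\<mu>/K) * (s t * s t)" using mu0 assms(4) by simp
      then show ?thesis using D(2)[OF that] by linarith
    qed
    have mono: "V b \<le> V a" if ab: "0 \<le> a" "a \<le> b" for a b
    proof (rule nonincr[OF D(1) _ ab])
      fix t assume "a < t" "t < b"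
      then have "t \<ge> 0" using ab(1) by linarith
      then show "D t \<le> 0" by (rule Dn)
    qed
    have low: "cmin * s t \<le> V t" if "t \<ge> 0" for t
    proof -
      have "cmin * fst (x t) \<le> \<sigma> * fst (x t)" unfolding cmin_def using nn[OF that] by (intro mult_right_mono) auto
      moreover have "cmin * snd (x t) \<le> r * snd (x t)" unfolding cmin_def using nn[OF that] by (intro mult_right_mono) auto
      ultimately show ?thesis unfolding s_def V_def by (simp add: distrib_left)
    qed
    have up: "V t \<le> cmax * s t" if "t \<ge> 0" for t
    proof -
      have "\<sigma> * fst (x t) \<le> cmax * fst (x t)" unfolding cmax_def using nn[OF that] by (intro mult_right_mono) auto
      moreover have "r * snd (x t) \<le> cmax * snd (x t)" unfolding cmax_def using nn[OF that] by (intro mult_right_mono) auto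
      ultimately show ?thesis unfolding s_def V_def by (simp add: distrib_left)
    qed
    have nrm: "norm (x t) \<le> V t / cmin" if "t \<ge> 0" for t
    proof -
      have "norm (x t) \<le> s t" unfolding s_def using norm_le_sum nn[OF that] by blast
      moreover have "s t \<le> V t / cmin" using low[OF that] cmin0 by (simp add: field_simps)
      ultimately show ?thesis by linarith
    qed
    have decay: "V T \<le> V 0 - (\<mu>/K)*(c0*c0) * T"
      if c0: "c0 > 0" "T \<ge> 0" "\<forall>t\<in>{0..T}. s t \<ge> c0" for c0 T
    proof -
      define \<kappa> where "\<kappa> = (\<mu>/K)*(c0*c0)"
      define W where "W t = V t + \<kappa> * t" for t
      have dW: "(W has_real_derivative D t + \<kappa>) (at t within {0..})" if "t \<ge> 0" for t
      proof -
        have "((\<lambda>t. \<kappa> * t) has_real_derivative \<kappa>) (at t within {0..})"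
          by (auto intro!: derivative_eq_intros)
        from DERIV_add[OF D(1)[OF that] this] show ?thesis unfolding W_def by simp
      qed
      have neg: "D t + \<kappa> \<le> 0" if "0 < t" "t < T" for t
      proof -
        have st: "s t \<ge> c0" using c0(3) that by auto
        have "c0*c0 \<le> s t * s t" using st c0(1) by (intro mult_mono) auto
        then have "(\<mu>/K)*(c0*c0) \<le> (\<mu>/K)*(s t * s t)" using mu0 assms(4) by (intro mult_left_mono) auto
        then show ?thesis using D(2)[of t] that unfolding \<kappa>_def by simp
      qed
      have "W T \<le> W 0" by (rule nonincr[OF dW neg]) (use c0 in auto)
      then show ?thesis unfolding W_def \<kappa>_def by simp
    qed
    show "x t \<in> Omega K" if "t \<ge> 0" for t using inv that by blast
    show "\<sigma> * fst (x b) + r * snd (x b) \<le> \<sigma> * fst (x a) + r * snd (x a)" if "0 \<le> a" "a \<le> b" for a b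
      using mono[OF that] unfolding V_def .
    show "norm (x t) \<le> (\<sigma> * fst (x t) + r * snd (x t)) / cmin" if "t \<ge> 0" for t
      using nrm[OF that] unfolding V_def .
    show "\<sigma> * fst (x t) + r * snd (x t) \<le> cmax * (fst (x t) + snd (x t))" if "t \<ge> 0" for t
      using up[OF that] unfolding V_def s_def .
    show "\<sigma> * fst (x T) + r * snd (x T) \<le> \<sigma> * fst (x 0) + r * snd (x 0) - (\<mu>/K)*(c0*c0) * T"
      if "c0 > 0" "T \<ge> 0" "\<forall>t\<in>{0..T}. fst (x t) + snd (x t) \<ge> c0" for c0 T
      using decay[OF that(1,2)] that(3) unfolding V_def s_def by blast
  qed
  have eq: "is_equilibrium (pm_field r \<alpha> K \<delta> \<sigma>) (0, 0)"
    unfolding is_equilibrium_def by (simp add: pm_field_def zero_prod_def)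
  have inO: "(0, 0) \<in> Omega K" using assms(4) by (simp add: Omega_def)
  have stab: "stable_in (pm_field r \<alpha> K \<delta> \<sigma>) (Omega K) (0, 0)"
    unfolding stable_in_def
  proof (intro allI impI)
    fix \<epsilon> :: real assume e: "\<epsilon> > 0"
    define \<eta> where "\<eta> = \<epsilon> * cmin / (2 * cmax)"
    have \<eta>0: "\<eta> > 0" using e cmin0 cmax0 by (simp add: \<eta>_def)
    show "\<exists>\<eta>>0. \<forall>x. is_solution (pm_field r \<alpha> K \<delta> \<sigma>) x \<and> x 0 \<in> Omega K \<and> dist (x 0) (0, 0) < \<eta>
        \<longrightarrow> (\<forall>t\<ge>0. dist (x t) (0, 0) < \<epsilon>)"
    proof (intro exI[of _ \<eta>] conjI allI impI)
      show "\<eta> > 0" by (rule \<eta>0)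
      fix x t assume H: "is_solution (pm_field r \<alpha> K \<delta> \<sigma>) x \<and> x 0 \<in> Omega K \<and> dist (x 0) (0, 0) < \<eta>"
        and t: "(t::real) \<ge> 0"
      have sx: "is_solution (pm_field r \<alpha> K \<delta> \<sigma>) x" and x0: "x 0 \<in> Omega K" using H by auto
      note M = main[OF sx x0]
      have nn0: "fst (x 0) \<ge> 0" "snd (x 0) \<ge> 0" using H unfolding Omega_def by (auto simp: case_prod_beta)
      have "fst (x 0) + snd (x 0) \<le> 2 * norm (x 0)" using sum_le_norm[of "x 0"] nn0 by simp
      also have "\<dots> < 2 * \<eta>" using H dist_zero_pair[of "x 0"] by simp
      finally have s0: "fst (x 0) + snd (x 0) < 2 * \<eta>" .
      have "\<sigma> * fst (x 0) + r * snd (x 0) \<le> cmax * (fst (x 0) + snd (x 0))" using M(4)[of 0] by simp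
      also have "\<dots> < cmax * (2 * \<eta>)" using s0 cmax0 by simp
      also have "\<dots> = \<epsilon> * cmin" unfolding \<eta>_def using cmax0 by simp
      finally have v0: "\<sigma> * fst (x 0) + r * snd (x 0) < \<epsilon> * cmin" .
      have "\<sigma> * fst (x t) + r * snd (x t) \<le> \<sigma> * fst (x 0) + r * snd (x 0)" using M(2)[of 0 t] t by simp
      then have vt: "\<sigma> * fst (x t) + r * snd (x t) < \<epsilon> * cmin" using v0 by linarith
      have "norm (x t) \<le> (\<sigma> * fst (x t) + r * snd (x t)) / cmin" using M(3)[OF t] .
      also have "\<dots> < \<epsilon>" using vt cmin0 by (simp add: field_simps)
      finally show "dist (x t) (0, 0) < \<epsilon>" using dist_zero_pair[of "x t"] by simp
    qed
  qed
  have attr: "globally_attractive_in (pm_field r \<alpha> K \<delta> \<sigma>) (Omega K) (0, 0)"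
    unfolding globally_attractive_in_def
  proof (intro allI impI)
    fix x assume H: "is_solution (pm_field r \<alpha> K \<delta> \<sigma>) x \<and> x 0 \<in> Omega K"
    have sx: "is_solution (pm_field r \<alpha> K \<delta> \<sigma>) x" and x0: "x 0 \<in> Omega K" using H by auto
    note M = main[OF sx x0]
    define V where "V t = \<sigma> * fst (x t) + r * snd (x t)" for t
    have Vmono: "V b \<le> V a" if "0 \<le> a" "a \<le> b" for a b using M(2)[OF that] unfolding V_def .
    have Vnrm: "norm (x t) \<le> V t / cmin" if "t \<ge> 0" for t using M(3)[OF that] unfolding V_def .
    have Vup: "V t \<le> cmax * (fst (x t) + snd (x t))" if "t \<ge> 0" for t using M(4)[OF that] unfolding V_def .
    have Vdec: "V T \<le> V 0 - (\<mu>/K)*(c0*c0) * T"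
      if "c0 > 0" "T \<ge> 0" "\<forall>t\<in>{0..T}. fst (x t) + snd (x t) \<ge> c0" for c0 T
      using M(5)[OF that] unfolding V_def .
    have Vnn: "V t \<ge> 0" if "t \<ge> 0" for t
    proof -
      have "0 \<le> V t / cmin" using Vnrm[OF that] norm_ge_zero[of "x t"] by linarith
      then show ?thesis using cmin0 by (simp add: zero_le_divide_iff)
    qed
    show "(x \<longlongrightarrow> (0, 0)) at_top"
      unfolding tendsto_iff
    proof (intro allI impI)
      fix e :: real assume e: "e > 0"
      define \<epsilon>' where "\<epsilon>' = e * cmin"
      have \<epsilon>'0: "\<epsilon>' > 0" using e cmin0 by (simp add: \<epsilon>'_def)
      have "\<exists>t0\<ge>0. V t0 < \<epsilon>'"
      proof (rule ccontr)
        assume "\<not> (\<exists>t0\<ge>0. V t0 < \<epsilon>')"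
        then have big: "V t \<ge> \<epsilon>'" if "t \<ge> 0" for t using that by force
        define c0 where "c0 = \<epsilon>' / cmax"
        have c00: "c0 > 0" using \<epsilon>'0 cmax0 by (simp add: c0_def)
        have sc: "fst (x t) + snd (x t) \<ge> c0" if "t \<ge> 0" for t
        proof -
          have "\<epsilon>' \<le> cmax * (fst (x t) + snd (x t))" using big[OF that] Vup[OF that] by linarith
          then show ?thesis unfolding c0_def using cmax0 by (simp add: field_simps)
        qed
        define \<kappa> where "\<kappa> = (\<mu>/K)*(c0*c0)"
        have \<kappa>0: "\<kappa> > 0" unfolding \<kappa>_def using mu0 assms(4) c00 by simp
        define T where "T = V 0 / \<kappa> + 1"
        have T0: "T \<ge> 0" unfolding T_def using Vnn[of 0] \<kappa>0 by simp
        have "V T \<le> V 0 - \<kappa> * T" unfolding \<kappa>_def by (rule Vdec[OF c00 T0]) (use sc in auto)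
        also have "\<kappa> * T = V 0 + \<kappa>" unfolding T_def using \<kappa>0 by (simp add: field_simps)
        finally have "V T \<le> - \<kappa>" by simp
        then show False using Vnn[OF T0] \<kappa>0 by linarith
      qed
      then obtain t0 where t0: "t0 \<ge> 0" "V t0 < \<epsilon>'" by blast
      have "\<forall>t\<ge>t0. dist (x t) (0, 0) < e"
      proof (intro allI impI)
        fix t assume tt: "t \<ge> t0"
        then have t: "t \<ge> 0" using t0 by linarith
        have "V t < \<epsilon>'" using Vmono[OF t0(1) tt] t0(2) by linarith
        then have "V t / cmin < e" unfolding \<epsilon>'_def using cmin0 by (simp add: field_simps)
        then show "dist (x t) (0, 0) < e" using Vnrm[OF t] dist_zero_pair[of "x t"] by simp
      qed
      then show "eventually (\<lambda>t. dist (x t) (0, 0) < e) at_top"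
        unfolding eventually_at_top_linorder by blast
    qed
  qed
  show ?thesis unfolding globally_asymptotically_stable_in_def using inO eq stab attr by blast
qed

end
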